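(* Let $p$ be a prime, let $n\ge 0$ and $k\ge 0$ be integers, and let $a\in\mathbb{Z}_p$. For $x=a+p^n u$ with $u$ a variable, $\delta^k x$ is a polynomial in $u$ with coefficients in $\mathbb{Q}_p$ of degree at most $p^k$; write $\delta^k(a+p^n u)=\sum_{j=0}^{p^k} c^k_{a,j}u^j$ with $c^k_{a,j}\in\mathbb{Q}_p$. Then: (1) $|c^k_{a,0}|_p\le 1$; (2) $|c^k_{a,1}|_p=p^{-(n-k)}$; (3) $|c^k_{a,j}|_p\le p^{-((n-k+1)j-1)}$ for $2\le j\le p^k$.
   Context: $\mathbb{Q}_p$ is the field of $p$-adic numbers with $p$-adic norm $|\cdot|_p$ normalized by $|p|_p=p^{-1}$, and $\mathbb{Z}_p=\{x\in\mathbb{Q}_p:|x|_p\le 1\}$. The operator $\delta$ is the Fermat quotient operator $\delta y=(y-y^p)/p$, applied formally to polynomials in $u$ with $\mathbb{Q}_p$-coefficients, and $\delta^k$ is its $k$-th iterate ($\delta^0$ is the identity). *)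

theory Defs
  imports Complex_Main "HOL-Computational_Algebra.Computational_Algebra"
begin

definition padic_val_rat :: "nat \<Rightarrow> rat \<Rightarrow> int" where
  "padic_val_rat p q = (case quotient_of q of (a, b) \<Rightarrow>
      int (multiplicity (int p) a) - int (multiplicity (int p) b))"

definition padic_norm_rat :: "nat \<Rightarrow> rat \<Rightarrow> real" where
  "padic_norm_rat p q = (if q = 0 then 0 else real p powr (- real_of_int (padic_val_rat p q)))"

(* This characterises (Q_p, |.|_p) up to isometric isomorphism. *)
definition is_Qp :: "nat \<Rightarrow> ('a::field_char_0 \<Rightarrow> real) \<Rightarrow> bool" where
  "is_Qp p N \<longleftrightarrow>
     (\<forall>x. 0 \<le> N x) \<and> (\<forall>x. N x = 0 \<longleftrightarrow> x = 0) \<and>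
     (\<forall>x y. N (x * y) = N x * N y) \<and>
     (\<forall>x y. N (x + y) \<le> max (N x) (N y)) \<and>
     (\<forall>q. N (of_rat q) = padic_norm_rat p q) \<and>
     (\<forall>x e. e > 0 \<longrightarrow> (\<exists>q. N (x - of_rat q) < e)) \<and>
     (\<forall>X::nat \<Rightarrow> 'a. (\<forall>e>0. \<exists>M. \<forall>m\<ge>M. \<forall>m'\<ge>M. N (X m - X m') < e) \<longrightarrow>
        (\<exists>L. \<forall>e>0. \<exists>M. \<forall>m\<ge>M. N (X m - L) < e))"

definition fermat_delta :: "nat \<Rightarrow> 'a::field poly \<Rightarrow> 'a poly" where
  "fermat_delta p f = smult (inverse (of_nat p)) (f - f ^ p)"

end

theory Submission
  imports Defs "HOL-Number_Theory.Number_Theory"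
begin

hide_const (open) UnivPoly.coeff Module.smult

lemma int_fermat:
  fixes z :: int assumes pr: "prime p"
  shows "[z ^ p = z] (mod int p)"
proof -
  define m where "m = nat (z mod int p)"
  have p0: "p > 0" using pr prime_gt_0_nat by blast
  have zm: "[z = int m] (mod int p)" unfolding m_def using p0
    by (simp add: cong_def)
  have "[m ^ p = m] (mod p)"
  proof (cases "p dvd m")
    case True
    then have "p dvd m ^ p" using p0 True by (meson dvd_power dvd_trans)
    then show ?thesis using True unfolding cong_def by simp
  next
    case False
    then have "[m ^ (p - 1) = 1] (mod p)" using fermat_theorem pr by blast
    then have "[m * m ^ (p - 1) = m * 1] (mod p)" by (rule cong_mult[OF cong_refl])
    moreover have "m * m ^ (p - 1) = m ^ p" using p0
      by (metis Suc_diff_1 power_Suc)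
    ultimately show ?thesis by simp
  qed
  then have "[int m ^ p = int m] (mod int p)"
    by (metis cong_int_iff of_nat_power)
  moreover have "[z ^ p = int m ^ p] (mod int p)" using zm by (simp add: cong_pow)
  ultimately show ?thesis using zm cong_trans cong_sym by blast
qed


lemma coeff_power_one:
  fixes f :: "'b::comm_ring_1 poly"
  shows "coeff (f ^ n) 1 = of_nat n * coeff f 0 ^ (n - 1) * coeff f 1"
proof (induction n)
  case 0
  then show ?case by simp
next
  case (Suc n)
  have "coeff (f ^ Suc n) 1 = coeff f 0 * coeff (f ^ n) 1 + coeff f 1 * coeff f 0 ^ n"
    by (simp add: coeff_mult coeff_0_power)
  also have "\<dots> = of_nat (Suc n) * coeff f 0 ^ (Suc n - 1) * coeff f 1"
    unfolding Suc by (cases n) (simp_all add: algebra_simps)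
  finally show ?case .
qed

lemma pow_zero_low:
  fixes g :: "'b::comm_ring_1 poly"
  assumes g0: "coeff g 0 = 0"
  shows "j < i \<Longrightarrow> coeff (g ^ i) j = 0"
proof (induction i arbitrary: j)
  case 0
  then show ?case by simp
next
  case (Suc i)
  have "coeff (g ^ Suc i) j = (\<Sum>l\<le>j. coeff g l * coeff (g ^ i) (j - l))"
    by (simp add: coeff_mult)
  also have "\<dots> = 0"
  proof (rule sum.neutral, rule ballI)
    fix l assume l: "l \<in> {..j}"
    show "coeff g l * coeff (g ^ i) (j - l) = 0"
    proof (cases "l = 0")
      case True then show ?thesis using g0 by simp
    next
      case False
      then have "j - l < i" using Suc.prems l by auto
      then show ?thesis using Suc.IH by simp
    qed
  qed
  finally show ?case .
qed


context
  fixes p :: nat and N :: "'a::field_char_0 \<Rightarrow> real"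
  assumes pr: "prime p" and Q: "is_Qp p N"
begin

lemma N_nonneg: "0 \<le> N x" using Q unfolding is_Qp_def by blast
lemma N_zero_iff: "N x = 0 \<longleftrightarrow> x = 0" using Q unfolding is_Qp_def by blast
lemma N_mult: "N (x * y) = N x * N y" using Q unfolding is_Qp_def by blast
lemma N_add: "N (x + y) \<le> max (N x) (N y)" using Q unfolding is_Qp_def by blast
lemma N_rat: "N (of_rat q) = padic_norm_rat p q" using Q unfolding is_Qp_def by blast
lemma N_dense: "e > 0 \<Longrightarrow> \<exists>q. N (x - of_rat q) < e" using Q unfolding is_Qp_def by blast

lemma N_zero[simp]: "N 0 = 0" using N_zero_iff by simp

lemma N_one[simp]: "N 1 = 1"
proof -
  have "N 1 = N 1 * N 1" using N_mult[of 1 1] by simp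
  moreover have "N 1 \<noteq> 0" using N_zero_iff by simp
  ultimately show ?thesis by simp
qed

lemma N_minus[simp]: "N (- x) = N x"
proof -
  have "N (-1) * N (-1) = 1" using N_mult[of "-1" "-1"] by simp
  hence "N (-1) ^ 2 = 1 ^ 2" by (simp add: power2_eq_square)
  hence "N (-1) = 1" using N_nonneg[of "-1"] by (rule power2_eq_imp_eq) simp
  thus ?thesis using N_mult[of "-1" x] by simp
qed

lemma N_diff: "N (x - y) \<le> max (N x) (N y)"
  using N_add[of x "-y"] by simp

lemma N_power: "N (x ^ n) = N x ^ n"
  by (induction n) (simp_all add: N_mult)

lemma N_inverse: "x \<noteq> 0 \<Longrightarrow> N (inverse x) = inverse (N x)"
  using N_mult[of "inverse x" x] N_zero_iff[of x]
  by (simp add: field_simps)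

lemma N_of_nat: "N (of_nat m) \<le> 1"
proof (induction m)
  case (Suc m)
  then show ?case using N_add[of "of_nat m" 1] by (simp add: add.commute)
qed simp

lemma N_of_int: "N (of_int z) \<le> 1"
proof (cases "z \<ge> 0")
  case True
  then show ?thesis using N_of_nat[of "nat z"] by simp
next
  case False
  then show ?thesis using N_of_nat[of "nat (-z)"] N_minus[of "of_int z"] by simp
qed

lemma N_sum: "finite A \<Longrightarrow> 0 \<le> B \<Longrightarrow> (\<And>i. i \<in> A \<Longrightarrow> N (f i) \<le> B) \<Longrightarrow> N (sum f A) \<le> B"
proof (induction A rule: finite_induct)
  case (insert x F)
  have "N (f x) \<le> B" using insert.prems by simp
  moreover have "N (sum f F) \<le> B" using insert by simp
  ultimately show ?case using N_add[of "f x" "sum f F"] insert.hyps by simp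
qed simp

lemma p_gt1: "p > 1" using pr prime_gt_1_nat by blast

lemma N_p: "N (of_nat p) = 1 / real p"
proof -
  have "N (of_nat p) = N (of_rat (of_nat p))" by simp
  also have "\<dots> = padic_norm_rat p (of_nat p)" by (rule N_rat)
  also have "\<dots> = 1 / real p"
  proof -
    have q: "quotient_of (of_nat p :: rat) = (int p, 1)"
      using quotient_of_int[of "int p"] by simp
    have "multiplicity (int p) (int p) = 1"
      by (rule multiplicity_self) (use pr in \<open>auto simp: prime_gt_0_nat\<close>)
    then have "padic_val_rat p (of_nat p) = 1"
      unfolding padic_val_rat_def q by simp
    then show ?thesis using p_gt1 unfolding padic_norm_rat_def
      by (simp add: powr_minus_divide)
  qed
  finally show ?thesis .
qed

lemma N_pdvd: "int p dvd z \<Longrightarrow> N (of_int z) \<le> 1 / real p"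
proof -
  assume "int p dvd z"
  then obtain w where "z = int p * w" by blast
  then have "N (of_int z) = N (of_nat p) * N (of_int w)" by (simp add: N_mult)
  also have "\<dots> \<le> 1 / real p * 1"
    using N_p N_of_int[of w] N_nonneg[of "of_int w"] by (intro mult_mono) auto
  finally show ?thesis by simp
qed

lemma N_ultra_one: "N y < 1 \<Longrightarrow> N (1 - y) = 1"
proof -
  assume y: "N y < 1"
  have a: "N (1 - y) \<le> 1" using N_diff[of 1 y] y by simp
  have "1 \<le> max (N (1 - y)) (N y)" using N_add[of "1 - y" y] by simp
  then show ?thesis using a y by linarith
qed

lemma N_int_unit: "\<not> int p dvd z \<Longrightarrow> N (of_int z) = 1"
proof -
  assume nd: "\<not> int p dvd z"
  have "coprime (int p) z" using nd pr
    by (simp add: prime_imp_coprime)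
  then have "gcd (int p) z = 1" by simp
  then obtain u v where uv: "u * int p + v * z = 1" using bezout_int[of "int p" z] by metis
  have "1 = N (of_int (u * int p + v * z))" using uv by simp
  also have "\<dots> \<le> max (N (of_int (u * int p))) (N (of_int (v * z)))"
    using N_add by simp
  finally have m: "1 \<le> max (N (of_int (u * int p))) (N (of_int (v * z)))" .
  have "N (of_int (u * int p)) \<le> 1 / real p" by (rule N_pdvd) simp
  also have "\<dots> < 1" using p_gt1 by simp
  finally have "1 \<le> N (of_int (v * z))" using m by linarith
  also have "N (of_int (v * z)) = N (of_int v) * N (of_int z)" by (simp add: N_mult)
  also have "\<dots> \<le> N (of_int z)" using N_of_int[of v] N_nonneg[of "of_int z"] N_nonneg[of "of_int v"]
    by (intro mult_left_le_one_le) auto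
  finally show ?thesis using N_of_int[of z] by simp
qed


lemma N_fermat_rat:
  assumes "N (of_rat q) \<le> 1"
  shows "N (of_rat q - of_rat q ^ p) \<le> 1 / real p"
proof -
  obtain a b where ab: "quotient_of q = (a, b)" by (cases "quotient_of q") auto
  have b0: "b > 0" using ab quotient_of_denom_pos by blast
  have cop: "coprime a b" using ab quotient_of_coprime by blast
  have qab: "q = of_int a / of_int b" using ab quotient_of_div by blast
  define y :: 'a where "y = of_rat q"
  have ydef: "y = of_int a / of_int b" unfolding y_def qab by (simp add: of_rat_divide)
  have bne: "(of_int b :: 'a) \<noteq> 0" using b0 by simp
  have ya: "y * of_int b = of_int a" using ydef bne by simp
  have ndb: "\<not> int p dvd b"
  proof
    assume pb: "int p dvd b"
    have Nb: "N (of_int b) \<le> 1 / real p" using pb by (rule N_pdvd)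
    have "N (of_int a) = N y * N (of_int b)" using ya N_mult by metis
    also have "\<dots> \<le> 1 * (1 / real p)" using assms Nb N_nonneg unfolding y_def
      by (intro mult_mono) auto
    finally have Na: "N (of_int a) \<le> 1 / real p" by simp
    obtain u v where uv: "u * a + v * b = 1" using bezout_int[of a b] cop by auto
    have "1 = N (of_int (u * a + v * b))" using uv by simp
    also have "\<dots> \<le> max (N (of_int u * of_int a)) (N (of_int v * of_int b))"
      using N_add by simp
    also have "\<dots> \<le> 1 / real p"
    proof -
      have "N (of_int u * of_int a) \<le> 1 * (1 / real p)"
        unfolding N_mult using N_of_int Na N_nonneg by (intro mult_mono) auto
      moreover have "N (of_int v * of_int b) \<le> 1 * (1 / real p)"
        unfolding N_mult using N_of_int Nb N_nonneg by (intro mult_mono) auto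
      ultimately show ?thesis by simp
    qed
    finally show False using p_gt1 by (simp add: field_simps)
  qed
  have Nb1: "N (of_int b) = 1" using ndb by (rule N_int_unit)
  have eq: "(y - y ^ p) * of_int b ^ (p + 1) = of_int (a * b ^ p - b * a ^ p)"
  proof -
    have e1: "(of_int b :: 'a) ^ (p + 1) = of_int b ^ p * of_int b" by simp
    have "(y - y ^ p) * of_int b ^ (p + 1) = (y * of_int b) * of_int b ^ p - (y * of_int b) ^ p * of_int b"
      unfolding e1 power_mult_distrib by (simp add: algebra_simps)
    also have "\<dots> = of_int (a * b ^ p - b * a ^ p)" unfolding ya by simp
    finally show ?thesis .
  qed
  have "[a * b ^ p - b * a ^ p = a * b - b * a] (mod int p)"
    using int_fermat[OF pr, of a] int_fermat[OF pr, of b]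
    by (intro cong_diff cong_mult cong_refl) auto
  then have "int p dvd a * b ^ p - b * a ^ p"
    by (simp add: cong_0_iff)
  then have "N (of_int (a * b ^ p - b * a ^ p)) \<le> 1 / real p" by (rule N_pdvd)
  then have "N ((y - y ^ p) * of_int b ^ (p + 1)) \<le> 1 / real p" using eq by simp
  then show ?thesis unfolding y_def[symmetric] using Nb1 by (simp add: N_mult N_power)
qed


lemma N_fermat:
  assumes x1: "N x \<le> 1"
  shows "N (x - x ^ p) \<le> 1 / real p"
proof -
  have "1 / real p > 0" using p_gt1 by simp
  then obtain q where Nq: "N (x - of_rat q) < 1 / real p" using N_dense by blast
  define y :: 'a where "y = of_rat q"
  have Nxy: "N (x - y) < 1 / real p" using Nq y_def by simp
  have "N (x - y) < 1" using Nxy p_gt1 by (smt (verit) divide_le_eq_1 of_nat_1 of_nat_less_iff)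
  have "N y = N (x - (x - y))" by simp
  also have "\<dots> \<le> max (N x) (N (x - y))" by (rule N_diff)
  finally have y1: "N y \<le> 1" using x1 \<open>N (x - y) < 1\<close> by linarith
  have Fy: "N (y - y ^ p) \<le> 1 / real p" using N_fermat_rat y1 unfolding y_def by blast
  have ps: "Suc (p - 1) = p" using p_gt1 by simp
  have dp: "x ^ p - y ^ p = (x - y) * (\<Sum>i<p. x ^ i * y ^ (p - 1 - i))"
    using diff_power_eq_sum[of x "p - 1" y] unfolding ps by simp
  have "N (\<Sum>i<p. x ^ i * y ^ (p - 1 - i)) \<le> 1"
  proof (rule N_sum)
    fix i
    show "N (x ^ i * y ^ (p - 1 - i)) \<le> 1"
      unfolding N_mult N_power using x1 y1 N_nonneg
      by (simp add: mult_le_one power_le_one)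
  qed auto
  then have "N (x ^ p - y ^ p) \<le> N (x - y)"
    unfolding dp N_mult using N_nonneg[of "x - y"] by (simp add: mult_left_le)
  then have a: "N ((x - y) - (x ^ p - y ^ p)) \<le> 1 / real p"
    using N_diff[of "x - y" "x ^ p - y ^ p"] Nxy by linarith
  have "x - x ^ p = (y - y ^ p) + ((x - y) - (x ^ p - y ^ p))" by simp
  then have "N (x - x ^ p) \<le> max (N (y - y ^ p)) (N ((x - y) - (x ^ p - y ^ p)))"
    using N_add by metis
  then show ?thesis using a Fy by linarith
qed

lemma pow_bound:
  fixes g :: "'a poly"
  assumes g0: "coeff g 0 = 0" and R0: "R \<ge> 0"
    and gb: "\<And>j. j \<ge> 1 \<Longrightarrow> N (coeff g j) \<le> R ^ j * real p / real p ^ j"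
  shows "N (coeff (g ^ i) j) \<le> R ^ j * real p ^ i / real p ^ j"
proof (induction i arbitrary: j)
  case 0
  then show ?case using R0 p_gt1 by (cases "j = 0") auto
next
  case (Suc i)
  have "coeff (g ^ Suc i) j = (\<Sum>l\<le>j. coeff g l * coeff (g ^ i) (j - l))"
    by (simp add: coeff_mult)
  also have "N \<dots> \<le> R ^ j * real p ^ Suc i / real p ^ j"
  proof (rule N_sum)
    show "0 \<le> R ^ j * real p ^ Suc i / real p ^ j" using R0 by simp
  next
    fix l assume l: "l \<in> {..j}"
    show "N (coeff g l * coeff (g ^ i) (j - l)) \<le> R ^ j * real p ^ Suc i / real p ^ j"
    proof (cases "l = 0")
      case True then show ?thesis using g0 R0 by simp
    next
      case False
      have "N (coeff g l * coeff (g ^ i) (j - l))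
          \<le> (R ^ l * real p / real p ^ l) * (R ^ (j - l) * real p ^ i / real p ^ (j - l))"
        unfolding N_mult using gb[of l] False Suc.IH[of "j - l"] N_nonneg R0
        by (intro mult_mono) auto
      also have "\<dots> = (R ^ l * R ^ (j - l)) * (real p * real p ^ i) / (real p ^ l * real p ^ (j - l))"
        by simp
      also have "\<dots> = R ^ j * real p ^ Suc i / real p ^ j"
        using l by (simp flip: power_add)
      finally show ?thesis .
    qed
  qed auto
  finally show ?case .
qed

lemma fp_bound:
  fixes f :: "'a poly"
  assumes c1: "N (coeff f 0) \<le> 1" and R0: "R \<ge> 0"
    and fb: "\<And>j. j \<ge> 1 \<Longrightarrow> N (coeff f j) \<le> R ^ j * real p / real p ^ j"
    and j1: "j \<ge> 1"
  shows "N (coeff (f ^ p) j) \<le> R ^ j"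
proof -
  define c where "c = coeff f 0"
  define h where "h = f - [:c:]"
  have h0: "coeff h 0 = 0" unfolding h_def c_def by simp
  have hj: "coeff h l = coeff f l" if "l \<ge> 1" for l
    using that unfolding h_def by (cases l) auto
  have hb: "N (coeff h l) \<le> R ^ l * real p / real p ^ l" if "l \<ge> 1" for l
    using hj[OF that] fb[OF that] by simp
  have "f ^ p = (h + [:c:]) ^ p" unfolding h_def by simp
  also have "\<dots> = (\<Sum>i\<le>p. of_nat (p choose i) * h ^ i * [:c:] ^ (p - i))"
    by (rule binomial_ring)
  also have "\<dots> = (\<Sum>i\<le>p. smult (of_nat (p choose i) * c ^ (p - i)) (h ^ i))"
    by (simp add: poly_const_pow of_nat_poly mult.commute)
  finally have fp: "coeff (f ^ p) j = (\<Sum>i\<le>p. (of_nat (p choose i) * c ^ (p - i)) * coeff (h ^ i) j)"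
    by (simp add: coeff_sum)
  have "N (\<Sum>i\<le>p. (of_nat (p choose i) * c ^ (p - i)) * coeff (h ^ i) j) \<le> R ^ j"
  proof (rule N_sum)
    fix i
    have A: "N (of_nat (p choose i) * c ^ (p - i)) \<le> 1"
      unfolding N_mult N_power using N_of_nat c1 N_nonneg unfolding c_def
      by (simp add: mult_le_one power_le_one)
    show "N ((of_nat (p choose i) * c ^ (p - i)) * coeff (h ^ i) j) \<le> R ^ j"
    proof (cases "j < i")
      case True
      then show ?thesis using pow_zero_low[OF h0 True] R0 by simp
    next
      case False
      have B: "N (coeff (h ^ i) j) \<le> R ^ j * real p ^ i / real p ^ j"
        by (rule pow_bound[OF h0 R0 hb])
      have "real p ^ i \<le> real p ^ j" using False p_gt1 by (intro power_increasing) auto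
      then have "R ^ j * real p ^ i / real p ^ j \<le> R ^ j" using R0 p_gt1
        by (simp add: divide_le_eq mult_left_mono)
      then have "N (coeff (h ^ i) j) \<le> R ^ j" using B by linarith
      then have "N (of_nat (p choose i) * c ^ (p - i)) * N (coeff (h ^ i) j) \<le> 1 * R ^ j"
        using A N_nonneg by (intro mult_mono) auto
      then show ?thesis unfolding N_mult by simp
    qed
  qed (use R0 in auto)
  then show ?thesis using fp by simp
qed


lemma N_inv_p: "N (inverse (of_nat p)) = real p"
  using N_inverse[of "of_nat p"] N_p p_gt1 by simp

lemma coeff_delta: "coeff (fermat_delta p f) j = inverse (of_nat p) * (coeff f j - coeff (f ^ p) j)"
  by (simp add: fermat_delta_def)

lemma step:
  fixes f :: "'a poly"
  assumes d: "degree f \<le> p ^ k" and c0: "N (coeff f 0) \<le> 1" and c1: "N (coeff f 1) = R"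
    and R0: "R > 0"
    and fb: "\<And>j. j \<ge> 1 \<Longrightarrow> N (coeff f j) \<le> R ^ j * real p / real p ^ j"
  shows "degree (fermat_delta p f) \<le> p ^ Suc k \<and> N (coeff (fermat_delta p f) 0) \<le> 1
    \<and> N (coeff (fermat_delta p f) 1) = R * real p
    \<and> (\<forall>j\<ge>1. N (coeff (fermat_delta p f) j) \<le> (R * real p) ^ j * real p / real p ^ j)"
proof (intro conjI allI impI)
  have "degree (fermat_delta p f) \<le> degree (f - f ^ p)"
    unfolding fermat_delta_def by (rule degree_smult_le)
  also have "\<dots> \<le> max (degree f) (degree (f ^ p))" by (rule degree_diff_le_max)
  also have "\<dots> \<le> p ^ Suc k"
  proof -
    have "degree (f ^ p) \<le> degree f * p" by (rule degree_power_le)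
    also have "\<dots> \<le> p ^ k * p" using d by simp
    finally have "degree (f ^ p) \<le> p ^ Suc k" by (simp add: mult.commute)
    moreover have "degree f \<le> p ^ Suc k" using d p_gt1
      by (meson le_trans less_imp_le_nat power_increasing_iff lessI le_refl power_increasing zero_less_one_class.zero_le_one order_less_imp_le)
    ultimately show ?thesis by simp
  qed
  finally show "degree (fermat_delta p f) \<le> p ^ Suc k" .
next
  have "N (coeff (fermat_delta p f) 0) = real p * N (coeff f 0 - coeff f 0 ^ p)"
    unfolding coeff_delta N_mult N_inv_p by (simp add: coeff_0_power)
  also have "\<dots> \<le> real p * (1 / real p)"
    using N_fermat[OF c0] by (intro mult_left_mono) auto
  finally show "N (coeff (fermat_delta p f) 0) \<le> 1" using p_gt1 by simp
next
  define c where "c = coeff f 0"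
  have e: "coeff f 1 - coeff (f ^ p) 1 = (1 - of_nat p * c ^ (p - 1)) * coeff f 1"
    unfolding coeff_power_one c_def by (simp add: algebra_simps)
  have "N (of_nat p * c ^ (p - 1)) \<le> 1 / real p * 1"
    unfolding N_mult N_power c_def using N_p c0 N_nonneg
    by (intro mult_mono) (auto simp: power_le_one)
  also have "\<dots> < 1" using p_gt1 by simp
  finally have "N (1 - of_nat p * c ^ (p - 1)) = 1" by (rule N_ultra_one)
  then show "N (coeff (fermat_delta p f) 1) = R * real p"
    unfolding coeff_delta N_mult N_inv_p e c1 by simp
next
  fix j :: nat assume j1: "1 \<le> j"
  have pj: "real p \<le> real p ^ j" using j1 p_gt1
    by (metis One_nat_def of_nat_0_le_iff of_nat_1 of_nat_less_iff order_less_imp_le power_increasing power_one_right)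
  have "N (coeff f j) \<le> R ^ j * real p / real p ^ j" by (rule fb[OF j1])
  also have "\<dots> \<le> R ^ j" using pj R0 p_gt1
    by (simp add: divide_le_eq mult_left_mono)
  finally have A: "N (coeff f j) \<le> R ^ j" .
  have B: "N (coeff (f ^ p) j) \<le> R ^ j"
    using fp_bound[OF c0 _ fb j1] R0 by simp
  have "N (coeff (fermat_delta p f) j) = real p * N (coeff f j - coeff (f ^ p) j)"
    unfolding coeff_delta N_mult N_inv_p by simp
  also have "\<dots> \<le> real p * R ^ j"
    using N_diff[of "coeff f j" "coeff (f ^ p) j"] A B by (intro mult_left_mono) auto
  also have "\<dots> = (R * real p) ^ j * real p / real p ^ j"
    using p_gt1 by (simp add: power_mult_distrib)
  finally show "N (coeff (fermat_delta p f) j) \<le> (R * real p) ^ j * real p / real p ^ j" .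
qed

lemma main_inv:
  assumes a1: "N a \<le> 1"
  shows "degree ((fermat_delta p ^^ k) [:a, of_nat p ^ n:]) \<le> p ^ k
    \<and> N (coeff ((fermat_delta p ^^ k) [:a, of_nat p ^ n:]) 0) \<le> 1
    \<and> N (coeff ((fermat_delta p ^^ k) [:a, of_nat p ^ n:]) 1) = real p powr (real k - real n)
    \<and> (\<forall>j\<ge>1. N (coeff ((fermat_delta p ^^ k) [:a, of_nat p ^ n:]) j)
        \<le> (real p powr (real k - real n)) ^ j * real p / real p ^ j)"
proof (induction k)
  case 0
  have pp: "real p > 0" using p_gt1 by simp
  have n1: "N (of_nat p ^ n) = real p powr (real 0 - real n)"
    unfolding N_power N_p using pp by (simp add: powr_minus powr_realpow power_divide inverse_eq_divide)
  show ?case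
  proof (intro conjI allI impI)
    show "degree ((fermat_delta p ^^ 0) [:a, of_nat p ^ n:]) \<le> p ^ 0" by simp
    show "N (coeff ((fermat_delta p ^^ 0) [:a, of_nat p ^ n:]) 0) \<le> 1" using a1 by simp
    show "N (coeff ((fermat_delta p ^^ 0) [:a, of_nat p ^ n:]) 1) = real p powr (real 0 - real n)"
      using n1 by simp
    fix j :: nat assume j1: "1 \<le> j"
    show "N (coeff ((fermat_delta p ^^ 0) [:a, of_nat p ^ n:]) j)
        \<le> (real p powr (real 0 - real n)) ^ j * real p / real p ^ j"
    proof (cases "j = 1")
      case True then show ?thesis using n1 pp by simp
    next
      case False
      then obtain m where "j = Suc (Suc m)" using j1 by (cases j; cases "j - 1") auto
      then show ?thesis using pp by simp
    qed
  qed
next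
  case (Suc k)
  have pp: "real p > 0" using p_gt1 by simp
  have R: "real p powr (real k - real n) * real p = real p powr (real (Suc k) - real n)"
  proof -
    have "real p powr (real k - real n) * real p = real p powr (real k - real n) * real p powr 1"
      using pp by simp
    also have "\<dots> = real p powr (real k - real n + 1)" by (simp add: powr_add)
    finally show ?thesis by (simp add: algebra_simps)
  qed
  show ?case
    using step[of "(fermat_delta p ^^ k) [:a, of_nat p ^ n:]" k "real p powr (real k - real n)"] Suc pp
    unfolding R by simp
qed

end

lemma exponent_conv:
  fixes p :: nat and n k j :: nat assumes "p > 1"
  shows "(real p powr (real k - real n)) ^ j * real p / real p ^ j
       = real p powr (- ((real n - real k + 1) * real j - 1))"
proof -
  have pp: "real p > 0" using assms by simp
  have "(real p powr (real k - real n)) ^ j = real p powr ((real k - real n) * real j)"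
    using pp by (simp add: powr_realpow[symmetric] powr_powr)
  moreover have "real p ^ j = real p powr real j" using pp by (simp add: powr_realpow)
  moreover have "real p = real p powr 1" using pp by simp
  ultimately have "(real p powr (real k - real n)) ^ j * real p / real p ^ j
      = real p powr ((real k - real n) * real j) * real p powr 1 / real p powr real j" by simp
  also have "\<dots> = real p powr ((real k - real n) * real j + 1 - real j)"
    by (simp add: powr_add powr_diff)
  also have "(real k - real n) * real j + 1 - real j = - ((real n - real k + 1) * real j - 1)"
    by (simp add: algebra_simps)
  finally show ?thesis .
qed

theorem lemma2p1:
  fixes p n k :: nat and N :: "'a::field_char_0 \<Rightarrow> real" and a :: 'a
  assumes "prime p" and "is_Qp p N" and "N a \<le> 1"
  shows "degree ((fermat_delta p ^^ k) [:a, of_nat p ^ n:]) \<le> p ^ k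
    \<and> N (coeff ((fermat_delta p ^^ k) [:a, of_nat p ^ n:]) 0) \<le> 1
    \<and> N (coeff ((fermat_delta p ^^ k) [:a, of_nat p ^ n:]) 1) = real p powr (- (real n - real k))
    \<and> (\<forall>j. 2 \<le> j \<and> j \<le> p ^ k \<longrightarrow>
         N (coeff ((fermat_delta p ^^ k) [:a, of_nat p ^ n:]) j)
           \<le> real p powr (- ((real n - real k + 1) * real j - 1)))"
proof -
  note I = main_inv[OF assms(1) assms(2) assms(3), of k n]
  have p1: "p > 1" using assms(1) prime_gt_1_nat by blast
  show ?thesis
  proof (intro conjI allI impI)
    show "degree ((fermat_delta p ^^ k) [:a, of_nat p ^ n:]) \<le> p ^ k" using I by blast
    show "N (coeff ((fermat_delta p ^^ k) [:a, of_nat p ^ n:]) 0) \<le> 1" using I by blast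
    show "N (coeff ((fermat_delta p ^^ k) [:a, of_nat p ^ n:]) 1) = real p powr (- (real n - real k))"
      using I by simp
    fix j assume j: "2 \<le> j \<and> j \<le> p ^ k"
    then have "N (coeff ((fermat_delta p ^^ k) [:a, of_nat p ^ n:]) j)
        \<le> (real p powr (real k - real n)) ^ j * real p / real p ^ j" using I by simp
    then show "N (coeff ((fermat_delta p ^^ k) [:a, of_nat p ^ n:]) j)
           \<le> real p powr (- ((real n - real k + 1) * real j - 1))"
      using exponent_conv[OF p1] by simp
  qed
qed

end
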